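(* Let $\mathcal{X}$ and $\mathcal{Y}$ be arbitrary finite alphabets with $|\mathcal{X}|\geq 2$ and $|\mathcal{Y}|\geq 2$. Let $\mathcal{M}(\mathcal{X},\mathcal{Y})$ be the set of all functions $F_{\mathrm{opt}}$ which take as input a computable source distribution $P_X\in\mathcal{P}_{\mathrm{c}}(\mathcal{X})$, a computable distortion measure $d:\mathcal{X}\times\mathcal{Y}\to\mathbb{R}_{\geq0,\mathrm{c}}$ and a computable distortion level $D\in\mathbb{R}_{\mathrm{c}}$, and output some optimal test channel $P^{*}_{Y|X}\in\mathcal{P}_{\mathrm{opt}}(d,D,P_X)$. Then, provided the source probability $P_X$ is non-trivial, there exists no function $F_{\mathrm{opt}}\in\mathcal{M}(\mathcal{X},\mathcal{Y})$ that is Banach–Mazur computable (and hence none that is Turing computable).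
   Context: A real number $x$ is computable if there are recursive functions producing a sequence of rationals $r_k$ and a recursive modulus $e$ with $|x-r_k|\leq 2^{-N}$ for all $k\geq e(N)$; $\mathbb{R}_{\mathrm{c}}$ denotes the computable reals, and a sequence of reals (or of finite tuples/matrices of reals) is computable if the approximating rationals and modulus can be given uniformly by recursive functions of the index. $\mathcal{P}_{\mathrm{c}}(\mathcal{X})$ denotes the probability distributions on $\mathcal{X}$ with computable entries, and $\mathbb{R}_{\geq0,\mathrm{c}}$ the non-negative computable reals. A distortion measure is a function $d:\mathcal{X}\times\mathcal{Y}\to\mathbb{R}_{\geq 0}$. For a source distribution $P_X$, distortion measure $d$ and level $D$, the rate distortion function is $R(D)=\inf\{I(X;Y): P_{Y|X},\ \sum_{x,y}P_X(x)P_{Y|X}(y|x)d(x,y)\leq D\}$, the infimum over all transition probability matrices (test channels) $P_{Y|X}$, with $I(X;Y)$ the mutual information of the joint distribution $P_X P_{Y|X}$; $\mathcal{P}_{\mathrm{opt}}(d,D,P_X)$ is the set of test channels attaining this minimum. A function $F$ defined on tuples of computable reals (here $(P_X,d,D)$) with values in tuples of reals (here transition matrices) is Banach–Mazur computable if it maps every computable sequence of inputs to a computable sequence of outputs. *)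

theory Defs
  imports Complex_Main
begin

fun primrec_fn :: "(nat list \<Rightarrow> nat) \<Rightarrow> (nat list \<Rightarrow> nat) \<Rightarrow> nat \<Rightarrow> nat list \<Rightarrow> nat" where
  "primrec_fn g h 0 xs = g xs"
| "primrec_fn g h (Suc y) xs = h (y # primrec_fn g h y xs # xs)"

text \<open>recfn n f: f is a (total) recursive function of arity n (only its values on
  argument lists of length n matter).\<close>
inductive recfn :: "nat \<Rightarrow> (nat list \<Rightarrow> nat) \<Rightarrow> bool" where
  rf_zero: "recfn n (\<lambda>_. 0)"
| rf_succ: "recfn 1 (\<lambda>xs. Suc (hd xs))"
| rf_proj: "i < n \<Longrightarrow> recfn n (\<lambda>xs. xs ! i)"
| rf_comp: "recfn m g \<Longrightarrow> length fs = m \<Longrightarrow> (\<forall>i<m. recfn n (fs ! i))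
            \<Longrightarrow> recfn n (\<lambda>xs. g (map (\<lambda>f. f xs) fs))"
| rf_prim: "recfn n g \<Longrightarrow> recfn (Suc (Suc n)) h
            \<Longrightarrow> recfn (Suc n) (\<lambda>xs. primrec_fn g h (hd xs) (tl xs))"
| rf_mu: "recfn (Suc n) g \<Longrightarrow> (\<forall>xs. length xs = n \<longrightarrow> (\<exists>y. g (y # xs) = 0))
            \<Longrightarrow> recfn n (\<lambda>xs. LEAST y. g (y # xs) = 0)"
| rf_ext: "recfn n f \<Longrightarrow> (\<forall>xs. length xs = n \<longrightarrow> f' xs = f xs) \<Longrightarrow> recfn n f'"

definition recursive2 :: "(nat \<Rightarrow> nat \<Rightarrow> nat) \<Rightarrow> bool" where
  "recursive2 f \<longleftrightarrow> recfn 2 (\<lambda>xs. f (xs ! 0) (xs ! 1))"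

definition rat_code :: "nat \<Rightarrow> nat \<Rightarrow> nat \<Rightarrow> real" where
  "rat_code s a b = (-1) ^ s * real a / real (Suc b)"

definition computable_seq :: "(nat \<Rightarrow> real) \<Rightarrow> bool" where
  "computable_seq x \<longleftrightarrow> (\<exists>s a b e. recursive2 s \<and> recursive2 a \<and> recursive2 b \<and> recursive2 e \<and>
      (\<forall>n N k. e n N \<le> k \<longrightarrow> \<bar>x n - rat_code (s n k) (a n k) (b n k)\<bar> \<le> 1 / 2 ^ N))"

definition computable_real :: "real \<Rightarrow> bool" where
  "computable_real r \<longleftrightarrow> computable_seq (\<lambda>_. r)"

definition is_pmf :: "('x::finite \<Rightarrow> real) \<Rightarrow> bool" where
  "is_pmf P \<longleftrightarrow> (\<forall>x. 0 \<le> P x) \<and> (\<Sum>x\<in>UNIV. P x) = 1"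

definition nontrivial_pmf :: "('x::finite \<Rightarrow> real) \<Rightarrow> bool" where
  "nontrivial_pmf P \<longleftrightarrow> (\<forall>x. P x \<noteq> 1)"

definition test_channel :: "('x::finite \<Rightarrow> 'y::finite \<Rightarrow> real) \<Rightarrow> bool" where
  "test_channel W \<longleftrightarrow> (\<forall>x y. 0 \<le> W x y) \<and> (\<forall>x. (\<Sum>y\<in>UNIV. W x y) = 1)"

definition out_dist :: "('x::finite \<Rightarrow> real) \<Rightarrow> ('x \<Rightarrow> 'y \<Rightarrow> real) \<Rightarrow> 'y \<Rightarrow> real" where
  "out_dist P W y = (\<Sum>x\<in>UNIV. P x * W x y)"

definition mutual_info :: "('x::finite \<Rightarrow> real) \<Rightarrow> ('x \<Rightarrow> 'y::finite \<Rightarrow> real) \<Rightarrow> real" where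
  "mutual_info P W = (\<Sum>x\<in>UNIV. \<Sum>y\<in>UNIV.
      (if P x * W x y = 0 then 0 else P x * W x y * log 2 (W x y / out_dist P W y)))"

definition avg_distortion :: "('x::finite \<Rightarrow> real) \<Rightarrow> ('x \<Rightarrow> 'y::finite \<Rightarrow> real) \<Rightarrow> ('x \<Rightarrow> 'y \<Rightarrow> real) \<Rightarrow> real" where
  "avg_distortion P W d = (\<Sum>x\<in>UNIV. \<Sum>y\<in>UNIV. P x * W x y * d x y)"

definition P_opt :: "('x::finite \<Rightarrow> 'y::finite \<Rightarrow> real) \<Rightarrow> real \<Rightarrow> ('x \<Rightarrow> real) \<Rightarrow> ('x \<Rightarrow> 'y \<Rightarrow> real) set" where
  "P_opt d D P = {W. test_channel W \<and> avg_distortion P W d \<le> D \<and>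
      (\<forall>W'. test_channel W' \<and> avg_distortion P W' d \<le> D \<longrightarrow> mutual_info P W \<le> mutual_info P W')}"

definition admissible_input :: "('x::finite \<Rightarrow> real) \<Rightarrow> ('x \<Rightarrow> 'y::finite \<Rightarrow> real) \<Rightarrow> real \<Rightarrow> bool" where
  "admissible_input P d D \<longleftrightarrow> is_pmf P \<and> nontrivial_pmf P \<and> (\<forall>x. computable_real (P x)) \<and>
     (\<forall>x y. 0 \<le> d x y \<and> computable_real (d x y)) \<and> computable_real D \<and> P_opt d D P \<noteq> {}"

definition M_opt :: "(('x::finite \<Rightarrow> real) \<Rightarrow> ('x \<Rightarrow> 'y::finite \<Rightarrow> real) \<Rightarrow> real \<Rightarrow> ('x \<Rightarrow> 'y \<Rightarrow> real)) set" where
  "M_opt = {F. \<forall>P d D. admissible_input P d D \<longrightarrow> F P d D \<in> P_opt d D P}"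

text \<open>Banach-Mazur computability on admissible inputs: every computable sequence of
  admissible inputs is mapped to a computable sequence of matrices (componentwise; over
  finite index types componentwise computability is equivalent to uniform computability).\<close>
definition BM_computable :: "(('x::finite \<Rightarrow> real) \<Rightarrow> ('x \<Rightarrow> 'y::finite \<Rightarrow> real) \<Rightarrow> real \<Rightarrow> ('x \<Rightarrow> 'y \<Rightarrow> real)) \<Rightarrow> bool" where
  "BM_computable F \<longleftrightarrow>
     (\<forall>(P :: nat \<Rightarrow> 'x \<Rightarrow> real) (d :: nat \<Rightarrow> 'x \<Rightarrow> 'y \<Rightarrow> real) (D :: nat \<Rightarrow> real).
        (\<forall>n. admissible_input (P n) (d n) (D n)) \<and>
        (\<forall>x. computable_seq (\<lambda>n. P n x)) \<and> (\<forall>x y. computable_seq (\<lambda>n. d n x y)) \<and>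
        computable_seq D
        \<longrightarrow> (\<forall>x y. computable_seq (\<lambda>n. F (P n) (d n) (D n) x y)))"

end

theory Submission
  imports Defs
begin

section \<open>Pairing and list encoding\<close>

fun tri :: "nat \<Rightarrow> nat" where
  "tri 0 = 0"
| "tri (Suc n) = tri n + Suc n"

lemma tri_mono: "m \<le> n \<Longrightarrow> tri m \<le> tri n"
  by (induction n) (auto simp: le_Suc_eq)

lemma tri_ge: "n \<le> tri n"
  by (induction n) auto

definition pr :: "nat \<Rightarrow> nat \<Rightarrow> nat" where
  "pr a b = tri (a + b) + a"

definition sf :: "nat \<Rightarrow> nat" where
  "sf z = (LEAST s. z < tri (Suc s))"

definition p1 :: "nat \<Rightarrow> nat" where
  "p1 z = z - tri (sf z)"

definition p2 :: "nat \<Rightarrow> nat" where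
  "p2 z = sf z - p1 z"

lemma sf_pr: "sf (pr a b) = a + b"
  unfolding sf_def pr_def
proof (rule Least_equality)
  show "tri (a + b) + a < tri (Suc (a + b))" by simp
next
  fix s assume "tri (a + b) + a < tri (Suc s)"
  then have "tri (a+b) < tri (Suc s)" by simp
  then have "\<not> Suc s \<le> a + b" using tri_mono by (metis not_le)
  then show "a + b \<le> s" by simp
qed

lemma p1_pr[simp]: "p1 (pr a b) = a"
  unfolding p1_def using sf_pr by (simp add: pr_def)

lemma p2_pr[simp]: "p2 (pr a b) = b"
  unfolding p2_def using sf_pr by simp

lemma pr_inj[simp]: "pr a b = pr c d \<longleftrightarrow> a = c \<and> b = d"
  by (metis p1_pr p2_pr)

definition ncons :: "nat \<Rightarrow> nat \<Rightarrow> nat" where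
  "ncons x l = Suc (pr x l)"

definition nhd :: "nat \<Rightarrow> nat" where
  "nhd z = p1 (z - 1)"

definition ntl :: "nat \<Rightarrow> nat" where
  "ntl z = p2 (z - 1)"

lemma nhd_ncons[simp]: "nhd (ncons x l) = x" by (simp add: nhd_def ncons_def)
lemma ntl_ncons[simp]: "ntl (ncons x l) = l" by (simp add: ntl_def ncons_def)
lemma ncons_nz[simp]: "ncons x l \<noteq> 0" "ncons x l = 0 \<longleftrightarrow> False" by (simp_all add: ncons_def)
lemma ncons_inj[simp]: "ncons a b = ncons c d \<longleftrightarrow> a = c \<and> b = d"
  by (simp add: ncons_def)

fun nlist :: "nat list \<Rightarrow> nat" where
  "nlist [] = 0"
| "nlist (x # xs) = ncons x (nlist xs)"

definition nnth :: "nat \<Rightarrow> nat \<Rightarrow> nat" where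
  "nnth l i = nhd ((ntl ^^ i) l)"

lemma nnth_nlist: "i < length xs \<Longrightarrow> nnth (nlist xs) i = xs ! i"
proof (induction xs arbitrary: i)
  case Nil then show ?case by simp
next
  case (Cons x xs)
  then show ?case
    by (cases i) (simp_all add: nnth_def funpow_swap1)
qed

section \<open>Closure properties of recfn\<close>

lemma len1: "length xs = 1 \<Longrightarrow> xs = [xs!0]"
  by (cases xs) auto
lemma len2: "length xs = 2 \<Longrightarrow> xs = [xs!0, xs!1]"
  by (cases xs; cases "tl xs") auto
lemma len3: "length xs = 3 \<Longrightarrow> xs = [xs!0, xs!1, xs!2]"
  by (cases xs; cases "tl xs"; cases "tl (tl xs)") auto

lemma len1_hd: "length xs = Suc 0 \<Longrightarrow> hd xs = xs!0 \<and> tl xs = []"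
  by (cases xs) auto

lemma rf_ext': "recfn n f \<Longrightarrow> n = m \<Longrightarrow> (\<And>xs. length xs = m \<Longrightarrow> f' xs = f xs) \<Longrightarrow> recfn m f'"
  using rf_ext by blast

lemma rf_comp1: assumes "recfn 1 g" "recfn n f" shows "recfn n (\<lambda>xs. g [f xs])"
proof -
  have "recfn n (\<lambda>xs. g (map (\<lambda>f. f xs) [f]))"
    by (rule rf_comp) (use assms in auto)
  then show ?thesis by simp
qed

lemma rf_comp2: assumes "recfn 2 g" "recfn n f1" "recfn n f2"
  shows "recfn n (\<lambda>xs. g [f1 xs, f2 xs])"
proof -
  have "recfn n (\<lambda>xs. g (map (\<lambda>f. f xs) [f1, f2]))"
    by (rule rf_comp[OF assms(1)]) (use assms in \<open>auto simp: less_2_cases_iff\<close>)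
  then show ?thesis by simp
qed

lemma rf_comp3: assumes "recfn 3 g" "recfn n f1" "recfn n f2" "recfn n f3"
  shows "recfn n (\<lambda>xs. g [f1 xs, f2 xs, f3 xs])"
proof -
  have "recfn n (\<lambda>xs. g (map (\<lambda>f. f xs) [f1, f2, f3]))"
  proof (rule rf_comp[OF assms(1)])
    show "\<forall>i<3. recfn n ([f1, f2, f3] ! i)"
    proof (intro allI impI)
      fix i :: nat assume "i < 3"
      then have "i = 0 \<or> i = 1 \<or> i = 2" by auto
      then show "recfn n ([f1, f2, f3] ! i)" using assms by auto
    qed
  qed (use assms in auto)
  then show ?thesis by simp
qed

lemma rf_const: "recfn n (\<lambda>_. c)"
proof (induction c)
  case 0 then show ?case by (rule rf_zero)
next
  case (Suc c)
  have "recfn n (\<lambda>xs. (\<lambda>ys. Suc (hd ys)) [c])"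
    by (rule rf_comp1[OF rf_succ Suc])
  then show ?case by simp
qed

lemma rf_op1: assumes "recfn 1 (\<lambda>ys. op (ys!0))" "recfn n f"
  shows "recfn n (\<lambda>xs. op (f xs))"
  using rf_comp1[OF assms] by simp

lemma rf_op2: assumes "recfn 2 (\<lambda>ys. op (ys!0) (ys!1))" "recfn n f" "recfn n g"
  shows "recfn n (\<lambda>xs. op (f xs) (g xs))"
  using rf_comp2[OF assms] by simp

lemma rf_op3: assumes "recfn 3 (\<lambda>ys. op (ys!0) (ys!1) (ys!2))" "recfn n f" "recfn n g" "recfn n h"
  shows "recfn n (\<lambda>xs. op (f xs) (g xs) (h xs))"
  using rf_comp3[OF assms] by simp

lemma rf_Suc1: "recfn 1 (\<lambda>ys. Suc (ys!0))"
proof (rule rf_ext'[OF rf_succ])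
  fix xs :: "nat list" assume "length xs = 1"
  then show "Suc (xs!0) = Suc (hd xs)" by (cases xs) auto
qed simp

lemma rf_Suc: "recfn n f \<Longrightarrow> recfn n (\<lambda>xs. Suc (f xs))"
  by (rule rf_op1[OF rf_Suc1])

lemma rf_iter: assumes "recfn 1 (\<lambda>ys. f (ys!0))"
  shows "recfn 2 (\<lambda>ys. (f ^^ (ys!0)) (ys!1))"
proof -
  have h: "recfn 3 (\<lambda>ys. f (ys!1))"
    by (rule rf_op1[OF assms]) (rule rf_proj, simp)
  have g: "recfn 1 (\<lambda>ys. ys!0)" by (rule rf_proj) simp
  have R: "recfn (Suc 1) (\<lambda>xs. primrec_fn (\<lambda>ys. ys!0) (\<lambda>ys. f (ys!1)) (hd xs) (tl xs))"
    by (rule rf_prim[OF g]) (use h in \<open>simp add: eval_nat_numeral\<close>)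
  have E: "primrec_fn (\<lambda>ys. ys!0) (\<lambda>ys. f (ys!1)) y zs = (f ^^ y) (zs!0)" for y zs
    by (induction y) auto
  show ?thesis
  proof (rule rf_ext'[OF R])
    fix xs :: "nat list" assume "length xs = 2"
    then have "xs = [xs!0, xs!1]" by (rule len2)
    then show "(f ^^ (xs!0)) (xs!1) = primrec_fn (\<lambda>ys. ys!0) (\<lambda>ys. f (ys!1)) (hd xs) (tl xs)"
      by (metis E list.sel(1) list.sel(3) nth_Cons_0)
  qed auto
qed

lemma funpow_Suc_add': "(Suc ^^ n) m = n + m" by (induction n) auto

lemma rf_add2': "recfn 2 (\<lambda>ys. ys!0 + ys!1)"
proof -
  have "recfn 2 (\<lambda>ys. (Suc ^^ (ys!0)) (ys!1))" by (rule rf_iter[OF rf_Suc1])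
  then show ?thesis by (rule rf_ext') (simp_all add: funpow_Suc_add')
qed

lemma rf_add: "recfn n f \<Longrightarrow> recfn n g \<Longrightarrow> recfn n (\<lambda>xs. f xs + g xs)"
  by (rule rf_op2[OF rf_add2'])

lemma rf_pred1: "recfn 1 (\<lambda>ys. ys!0 - 1)"
proof -
  have R: "recfn (Suc 0) (\<lambda>xs. primrec_fn (\<lambda>_. 0) (\<lambda>ys. ys!0) (hd xs) (tl xs))"
    by (rule rf_prim[OF rf_zero]) (rule rf_proj, simp)
  have E: "primrec_fn (\<lambda>_. 0) (\<lambda>ys. ys!0) y zs = y - 1" for y zs
    by (cases y) auto
  show ?thesis
    by (rule rf_ext'[OF R]) (auto simp: E dest: len1_hd)
qed

lemma funpow_pred: "((\<lambda>z. z - 1) ^^ n) m = m - n" "((\<lambda>z. z - Suc 0) ^^ n) m = m - n"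
  by (induction n) auto

lemma rf_sub2: "recfn 2 (\<lambda>ys. ys!0 - ys!1)"
proof -
  have I: "recfn 2 (\<lambda>ys. ((\<lambda>z. z - 1) ^^ (ys!0)) (ys!1))"
    by (rule rf_iter[OF rf_pred1])
  have "recfn 2 (\<lambda>xs. (\<lambda>a b. ((\<lambda>z. z - 1) ^^ a) b) (xs!1) (xs!0))"
    by (rule rf_op2[where op="\<lambda>a b. ((\<lambda>z. z - 1) ^^ a) b"]) (use I in \<open>simp_all add: rf_proj\<close>)
  then show ?thesis by (rule rf_ext') (simp_all add: funpow_pred)
qed

lemma rf_sub: "recfn n f \<Longrightarrow> recfn n g \<Longrightarrow> recfn n (\<lambda>xs. f xs - g xs)"
  by (rule rf_op2[OF rf_sub2])

lemma rf_if3: "recfn 3 (\<lambda>ys. if ys!0 = 0 then ys!1 else ys!2)"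
proof -
  have R: "recfn (Suc 2) (\<lambda>xs. primrec_fn (\<lambda>xs. xs!0) (\<lambda>ys. ys!3) (hd xs) (tl xs))"
    by (rule rf_prim) (rule rf_proj, simp, rule rf_proj, simp)
  have E: "primrec_fn (\<lambda>xs. xs!0) (\<lambda>ys. ys!3) y zs = (if y = 0 then zs!0 else zs!1)" for y zs
    by (cases y) (auto simp: numeral_3_eq_3)
  show ?thesis
  proof (rule rf_ext'[OF R])
    fix xs :: "nat list" assume "length xs = 3"
    then have "xs = [xs!0, xs!1, xs!2]" by (rule len3)
    then show "(if xs!0 = 0 then xs!1 else xs!2) = primrec_fn (\<lambda>xs. xs!0) (\<lambda>ys. ys!3) (hd xs) (tl xs)"
      by (metis E list.sel(1) list.sel(3) nth_Cons_0 nth_Cons_Suc One_nat_def)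
  qed simp
qed

lemma rf_if: "recfn n c \<Longrightarrow> recfn n f \<Longrightarrow> recfn n g \<Longrightarrow> recfn n (\<lambda>xs. if c xs = 0 then f xs else g xs)"
  by (rule rf_op3[OF rf_if3])

lemma rf_ifeq: assumes "recfn n a" "recfn n b" "recfn n f" "recfn n g"
  shows "recfn n (\<lambda>xs. if a xs = b xs then f xs else g xs)"
proof -
  have "recfn n (\<lambda>xs. if (a xs - b xs) + (b xs - a xs) = 0 then f xs else g xs)"
    by (intro rf_if rf_add rf_sub assms)
  moreover have "(a xs - b xs) + (b xs - a xs) = 0 \<longleftrightarrow> a xs = b xs" for xs by auto
  ultimately show ?thesis by simp
qed

lemma rf_tri1: "recfn 1 (\<lambda>ys. tri (ys!0))"
proof -
  have R: "recfn (Suc 0) (\<lambda>xs. primrec_fn (\<lambda>_. 0) (\<lambda>ys. Suc (ys!Suc 0 + ys!0)) (hd xs) (tl xs))"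
    by (rule rf_prim[OF rf_zero]) (intro rf_Suc rf_add rf_proj, simp_all)
  have E: "primrec_fn (\<lambda>_. 0) (\<lambda>ys. Suc (ys!Suc 0 + ys!0)) y zs = tri y" for y zs
    by (induction y) auto
  show ?thesis
    by (rule rf_ext'[OF R]) (auto simp: E dest: len1_hd)
qed

lemma rf_tri: "recfn n f \<Longrightarrow> recfn n (\<lambda>xs. tri (f xs))"
  by (rule rf_op1[OF rf_tri1])

lemma rf_sf1: "recfn 1 (\<lambda>ys. sf (ys!0))"
proof -
  have G: "recfn (Suc 1) (\<lambda>ys. Suc (ys!1) - tri (Suc (ys!0)))"
    by (intro rf_sub rf_Suc rf_tri rf_proj) simp_all
  have T: "\<forall>xs. length xs = 1 \<longrightarrow> (\<exists>y. Suc ((y#xs)!1) - tri (Suc ((y#xs)!0)) = 0)"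
  proof (intro allI impI)
    fix xs :: "nat list"
    have "Suc (xs!0) \<le> tri (Suc (xs!0))" by (rule tri_ge)
    then show "\<exists>y. Suc ((y#xs)!1) - tri (Suc ((y#xs)!0)) = 0" by (intro exI[of _ "xs!0"]) simp
  qed
  have R: "recfn 1 (\<lambda>xs. LEAST y. Suc ((y#xs)!1) - tri (Suc ((y#xs)!0)) = 0)"
    by (rule rf_mu[OF G T])
  show ?thesis
  proof (rule rf_ext'[OF R])
    fix xs :: "nat list"
    have "(Suc (xs!0) - tri (Suc y) = 0) = (xs!0 < tri (Suc y))" for y by auto
    then show "sf (xs!0) = (LEAST y. Suc ((y#xs)!1) - tri (Suc ((y#xs)!0)) = 0)"
      by (simp add: sf_def)
  qed simp
qed

lemma rf_sf: "recfn n f \<Longrightarrow> recfn n (\<lambda>xs. sf (f xs))"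
  by (rule rf_op1[OF rf_sf1])

lemma rf_pr: "recfn n f \<Longrightarrow> recfn n g \<Longrightarrow> recfn n (\<lambda>xs. pr (f xs) (g xs))"
  unfolding pr_def by (intro rf_add rf_tri)

lemma rf_p1: "recfn n f \<Longrightarrow> recfn n (\<lambda>xs. p1 (f xs))"
  unfolding p1_def by (intro rf_sub rf_tri rf_sf)

lemma rf_p2: assumes "recfn n f" shows "recfn n (\<lambda>xs. p2 (f xs))"
proof -
  have "recfn n (\<lambda>xs. sf (f xs) - p1 (f xs))" by (rule rf_sub[OF rf_sf[OF assms] rf_p1[OF assms]])
  then show ?thesis unfolding p2_def .
qed

lemma rf_ncons: "recfn n f \<Longrightarrow> recfn n g \<Longrightarrow> recfn n (\<lambda>xs. ncons (f xs) (g xs))"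
  unfolding ncons_def by (intro rf_Suc rf_pr)

lemma rf_nhd: "recfn n f \<Longrightarrow> recfn n (\<lambda>xs. nhd (f xs))"
  unfolding nhd_def by (intro rf_p1 rf_sub rf_const)

lemma rf_ntl: "recfn n f \<Longrightarrow> recfn n (\<lambda>xs. ntl (f xs))"
  unfolding ntl_def by (intro rf_p2 rf_sub rf_const)

lemma rf_nnth: assumes "recfn n f" "recfn n g" shows "recfn n (\<lambda>xs. nnth (f xs) (g xs))"
proof -
  have N: "recfn 1 (\<lambda>ys. ntl (ys!0))" by (intro rf_ntl rf_proj) simp
  have I: "recfn 2 (\<lambda>ys. (ntl ^^ (ys!0)) (ys!1))" by (rule rf_iter[OF N])
  have "recfn n (\<lambda>xs. (\<lambda>a b. (ntl ^^ a) b) (g xs) (f xs))"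
    by (rule rf_op2[where op="\<lambda>a b. (ntl ^^ a) b", OF _ assms(2) assms(1)]) (use I in simp)
  then have "recfn n (\<lambda>xs. nhd ((\<lambda>a b. (ntl ^^ a) b) (g xs) (f xs)))"
    by (rule rf_nhd)
  then show ?thesis by (simp add: nnth_def)
qed

lemmas rf_intros = rf_const rf_Suc rf_add rf_sub rf_if rf_ifeq rf_tri rf_pr rf_p1 rf_p2
  rf_ncons rf_nhd rf_ntl rf_nnth

section \<open>A universal machine\<close>

definition ev :: "nat \<Rightarrow> nat \<Rightarrow> nat" where "ev c xs = pr 0 (pr c xs)"
definition spr :: "nat \<Rightarrow> nat \<Rightarrow> nat" where "spr fs xs = pr 1 (pr fs xs)"
definition apl :: "nat \<Rightarrow> nat" where "apl g = pr 2 g"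
definition apr :: "nat \<Rightarrow> nat \<Rightarrow> nat \<Rightarrow> nat" where "apr h y rest = pr 3 (pr h (pr y rest))"
definition mc :: "nat \<Rightarrow> nat \<Rightarrow> nat \<Rightarrow> nat" where "mc g y xs = pr 4 (pr g (pr y xs))"
definition push :: "nat \<Rightarrow> nat \<Rightarrow> nat" where "push v Fr = ncons (ncons v (nhd Fr)) (ntl Fr)"
definition pop :: "nat \<Rightarrow> nat" where "pop Fr = ncons (ntl (nhd Fr)) (ntl Fr)"

definition cZ :: nat where "cZ = pr 0 0"
definition cS :: nat where "cS = pr 1 0"
definition cP :: "nat \<Rightarrow> nat" where "cP i = pr 2 i"
definition cC :: "nat \<Rightarrow> nat \<Rightarrow> nat" where "cC g fs = pr 3 (pr g fs)"
definition cR :: "nat \<Rightarrow> nat \<Rightarrow> nat" where "cR g h = pr 4 (pr g h)"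
definition cM :: "nat \<Rightarrow> nat" where "cM g = pr 5 g"

definition stepE :: "nat \<Rightarrow> nat \<Rightarrow> nat \<Rightarrow> nat \<Rightarrow> nat" where
"stepE c xs T' Fr =
      (if p1 c = 0 then pr T' (push 0 Fr)
      else if p1 c = 1 then pr T' (push (Suc (nhd xs)) Fr)
      else if p1 c = 2 then pr T' (push (nnth xs (p2 c)) Fr)
      else if p1 c = 3 then pr (ncons (spr (p2 (p2 c)) xs) (ncons (apl (p1 (p2 c))) T')) (ncons 0 Fr)
      else if p1 c = 4 then (if nhd xs = 0 then pr (ncons (ev (p1 (p2 c)) (ntl xs)) T') Fr
             else pr (ncons (ev c (ncons (nhd xs - 1) (ntl xs)))
                        (ncons (apr (p2 (p2 c)) (nhd xs - 1) (ntl xs)) T')) Fr)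
      else pr (ncons (ev (p2 c) (ncons 0 xs)) (ncons (mc (p2 c) 0 xs) T')) Fr)"

definition stepS :: "nat \<Rightarrow> nat \<Rightarrow> nat \<Rightarrow> nat \<Rightarrow> nat" where
"stepS fs xs T' Fr = (if fs = 0 then pr T' Fr
      else pr (ncons (spr (ntl fs) xs) (ncons (ev (nhd fs) xs) T')) Fr)"

definition stepA :: "nat \<Rightarrow> nat \<Rightarrow> nat \<Rightarrow> nat \<Rightarrow> nat \<Rightarrow> nat" where
"stepA h y rest T' Fr = pr (ncons (ev h (ncons y (ncons (nhd (nhd Fr)) rest))) T') (pop Fr)"

definition stepM :: "nat \<Rightarrow> nat \<Rightarrow> nat \<Rightarrow> nat \<Rightarrow> nat \<Rightarrow> nat" where
"stepM g y xs T' Fr = (if nhd (nhd Fr) = 0 then pr T' (push y (pop Fr))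
      else pr (ncons (ev g (ncons (Suc y) xs)) (ncons (mc g (Suc y) xs) T')) (pop Fr))"

definition stepT :: "nat \<Rightarrow> nat \<Rightarrow> nat \<Rightarrow> nat" where
"stepT t T' Fr =
   (if p1 t = 0 then stepE (p1 (p2 t)) (p2 (p2 t)) T' Fr
   else if p1 t = 1 then stepS (p1 (p2 t)) (p2 (p2 t)) T' Fr
   else if p1 t = 2 then pr (ncons (ev (p2 t) (nhd Fr)) T') (ntl Fr)
   else if p1 t = 3 then stepA (p1 (p2 t)) (p1 (p2 (p2 t))) (p2 (p2 (p2 t))) T' Fr
   else stepM (p1 (p2 t)) (p1 (p2 (p2 t))) (p2 (p2 (p2 t))) T' Fr)"

definition step :: "nat \<Rightarrow> nat" where
"step z = (if p1 z = 0 then z else stepT (nhd (p1 z)) (ntl (p1 z)) (p2 z))"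

lemma rf_step: "recfn 1 (\<lambda>xs. step (xs!0))"
  unfolding step_def stepT_def stepE_def stepS_def stepA_def stepM_def ev_def spr_def apl_def apr_def mc_def push_def pop_def
  by (intro rf_intros rf_proj) simp_all

definition reach :: "nat \<Rightarrow> nat \<Rightarrow> bool" where
  "reach z z' \<longleftrightarrow> (\<exists>t. (step ^^ t) z = z')"

lemma reach_refl: "reach z z" unfolding reach_def by (rule exI[of _ 0]) simp

lemma reach_step: "reach (step z) z' \<Longrightarrow> reach z z'"
  unfolding reach_def by (metis funpow_Suc_right o_apply)

lemma reach_one: "step z = z' \<Longrightarrow> reach z z'"
  using reach_step reach_refl by blast

lemma reach_trans: "reach a b \<Longrightarrow> reach b c \<Longrightarrow> reach a c"
  unfolding reach_def by (metis funpow_add o_apply)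

lemma st_top: "step (pr (ncons t T) Fr) = stepT t T Fr"
  unfolding step_def by simp

lemma stT_E: "stepT (ev c xs) T Fr = stepE c xs T Fr" unfolding stepT_def ev_def by simp
lemma stT_S: "stepT (spr fs xs) T Fr = stepS fs xs T Fr" unfolding stepT_def spr_def by simp
lemma stT_apl: "stepT (apl g) T Fr = pr (ncons (ev g (nhd Fr)) T) (ntl Fr)" unfolding stepT_def apl_def by simp
lemma stT_apr: "stepT (apr h y rest) T Fr = stepA h y rest T Fr" unfolding stepT_def apr_def by simp
lemma stT_mc: "stepT (mc g y xs) T Fr = stepM g y xs T Fr" unfolding stepT_def mc_def by simp

lemma st_Z: "step (pr (ncons (ev cZ xs) T) (ncons tp F)) = pr T (ncons (ncons 0 tp) F)"
  unfolding st_top stT_E stepE_def cZ_def push_def by simp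
lemma st_S: "step (pr (ncons (ev cS xs) T) (ncons tp F)) = pr T (ncons (ncons (Suc (nhd xs)) tp) F)"
  unfolding st_top stT_E stepE_def cS_def push_def by simp
lemma st_P: "step (pr (ncons (ev (cP i) xs) T) (ncons tp F)) = pr T (ncons (ncons (nnth xs i) tp) F)"
  unfolding st_top stT_E stepE_def cP_def push_def by simp
lemma st_C: "step (pr (ncons (ev (cC g fs) xs) T) Fr) = pr (ncons (spr fs xs) (ncons (apl g) T)) (ncons 0 Fr)"
  unfolding st_top stT_E stepE_def cC_def by simp
lemma st_R0: "step (pr (ncons (ev (cR g h) (ncons 0 rest)) T) Fr) = pr (ncons (ev g rest) T) Fr"
  unfolding st_top stT_E stepE_def cR_def by simp
lemma st_RS: "step (pr (ncons (ev (cR g h) (ncons (Suc y) rest)) T) Fr) =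
   pr (ncons (ev (cR g h) (ncons y rest)) (ncons (apr h y rest) T)) Fr"
  unfolding st_top stT_E stepE_def cR_def by simp
lemma st_M: "step (pr (ncons (ev (cM g) xs) T) Fr) = pr (ncons (ev g (ncons 0 xs)) (ncons (mc g 0 xs) T)) Fr"
  unfolding st_top stT_E stepE_def cM_def by simp
lemma st_spr0: "step (pr (ncons (spr 0 xs) T) Fr) = pr T Fr"
  unfolding st_top stT_S stepS_def by simp
lemma st_spr: "step (pr (ncons (spr (ncons c cs) xs) T) Fr) = pr (ncons (spr cs xs) (ncons (ev c xs) T)) Fr"
  unfolding st_top stT_S stepS_def by simp
lemma st_apl: "step (pr (ncons (apl g) T) (ncons fr F)) = pr (ncons (ev g fr) T) F"
  unfolding st_top stT_apl by simp
lemma st_apr: "step (pr (ncons (apr h y rest) T) (ncons (ncons v tp) F)) =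
   pr (ncons (ev h (ncons y (ncons v rest))) T) (ncons tp F)"
  unfolding st_top stT_apr stepA_def pop_def by simp
lemma st_mc0: "step (pr (ncons (mc g y xs) T) (ncons (ncons 0 tp) F)) = pr T (ncons (ncons y tp) F)"
  unfolding st_top stT_mc stepM_def pop_def push_def by simp
lemma st_mcS: "v \<noteq> 0 \<Longrightarrow> step (pr (ncons (mc g y xs) T) (ncons (ncons v tp) F)) =
   pr (ncons (ev g (ncons (Suc y) xs)) (ncons (mc g (Suc y) xs) T)) (ncons tp F)"
  unfolding st_top stT_mc stepM_def pop_def by simp
lemma st_halt: "step (pr 0 Fr) = pr 0 Fr"
  unfolding step_def by simp

definition computes :: "nat \<Rightarrow> nat \<Rightarrow> (nat list \<Rightarrow> nat) \<Rightarrow> bool" where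
  "computes n c f \<longleftrightarrow> (\<forall>xs T tp F. length xs = n \<longrightarrow>
     reach (pr (ncons (ev c (nlist xs)) T) (ncons tp F)) (pr T (ncons (ncons (f xs) tp) F)))"

lemma computesD: "computes n c f \<Longrightarrow> length xs = n \<Longrightarrow>
   reach (pr (ncons (ev c (nlist xs)) T) (ncons tp F)) (pr T (ncons (ncons (f xs) tp) F))"
  unfolding computes_def by blast

lemma spread_lemma:
  assumes "length cs = length fl" "\<forall>i<length cs. computes n (cs!i) (fl!i)" "length xs = n"
  shows "reach (pr (ncons (spr (nlist cs) (nlist xs)) T) (ncons (nlist acc) F))
                (pr T (ncons (nlist (map (\<lambda>f. f xs) fl @ acc)) F))"
  using assms(1,2)
proof (induction cs arbitrary: fl T)
  case Nil
  then show ?case by (simp add: reach_one st_spr0)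
next
  case (Cons c cs)
  then obtain f fl' where fl: "fl = f # fl'" by (cases fl) auto
  have c: "computes n c f" using Cons.prems fl by force
  have IH: "reach (pr (ncons (spr (nlist cs) (nlist xs)) (ncons (ev c (nlist xs)) T)) (ncons (nlist acc) F))
                (pr (ncons (ev c (nlist xs)) T) (ncons (nlist (map (\<lambda>f. f xs) fl' @ acc)) F))"
    by (rule Cons.IH) (use Cons.prems fl in force)+
  have 2: "reach (pr (ncons (ev c (nlist xs)) T) (ncons (nlist (map (\<lambda>f. f xs) fl' @ acc)) F))
      (pr T (ncons (ncons (f xs) (nlist (map (\<lambda>f. f xs) fl' @ acc))) F))"
    using c assms(3) unfolding computes_def by blast
  show ?case
    by (rule reach_step) (use reach_trans[OF IH 2] fl in \<open>simp add: st_spr\<close>)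
qed

theorem adequacy: "recfn n f \<Longrightarrow> \<exists>c. computes n c f"
proof (induction rule: recfn.induct)
  case (rf_zero n)
  have "computes n cZ (\<lambda>_. 0)"
    unfolding computes_def by (simp add: reach_one st_Z)
  then show ?case ..
next
  case rf_succ
  have "computes 1 cS (\<lambda>xs. Suc (hd xs))"
    unfolding computes_def
  proof (intro allI impI)
    fix xs :: "nat list" and T tp F :: nat assume "length xs = (1::nat)"
    then obtain x where "xs = [x]" by (metis len1)
    then show "reach (pr (ncons (ev cS (nlist xs)) T) (ncons tp F)) (pr T (ncons (ncons (Suc (hd xs)) tp) F))"
      by (simp add: reach_one st_S)
  qed
  then show ?case ..
next
  case (rf_proj i n)
  have "computes n (cP i) (\<lambda>xs. xs ! i)"
    unfolding computes_def using rf_proj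
    by (simp add: reach_one st_P nnth_nlist)
  then show ?case ..
next
  case (rf_comp m g fs n)
  from rf_comp.IH(1) obtain cg where cg: "computes m cg g" by blast
  from rf_comp.IH(2) have "\<forall>i<m. \<exists>c. computes n c (fs!i)" by blast
  then obtain cf where cf: "\<forall>i<m. computes n (cf i) (fs!i)" by metis
  define cs where "cs = map cf [0..<m]"
  have "computes n (cC cg (nlist cs)) (\<lambda>xs. g (map (\<lambda>f. f xs) fs))"
    unfolding computes_def
  proof (intro allI impI)
    fix xs :: "nat list" and T tp F :: nat assume xs: "length xs = n"
    have 1: "reach (pr (ncons (spr (nlist cs) (nlist xs)) (ncons (apl cg) T)) (ncons (nlist []) (ncons tp F)))
         (pr (ncons (apl cg) T) (ncons (nlist (map (\<lambda>f. f xs) fs @ [])) (ncons tp F)))"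
      by (rule spread_lemma) (use cf xs rf_comp.hyps(2) in \<open>auto simp: cs_def\<close>)
    have 2: "reach (pr (ncons (ev cg (nlist (map (\<lambda>f. f xs) fs))) T) (ncons tp F))
        (pr T (ncons (ncons (g (map (\<lambda>f. f xs) fs)) tp) F))"
      using computesD[OF cg] rf_comp.hyps(2) by simp
    show "reach (pr (ncons (ev (cC cg (nlist cs)) (nlist xs)) T) (ncons tp F))
        (pr T (ncons (ncons (g (map (\<lambda>f. f xs) fs)) tp) F))"
      apply (rule reach_step)
      apply (simp add: st_C)
      apply (rule reach_trans[OF 1[simplified]])
      apply (rule reach_step)
      apply (simp add: st_apl)
      by (rule 2)
  qed
  then show ?case ..
next
  case (rf_prim n g h)
  from rf_prim.IH obtain cg ch where cg: "computes n cg g" and ch: "computes (Suc (Suc n)) ch h" by blast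
  have main: "\<forall>rest T tp F. length rest = n \<longrightarrow>
     reach (pr (ncons (ev (cR cg ch) (nlist (y#rest))) T) (ncons tp F))
           (pr T (ncons (ncons (primrec_fn g h y rest) tp) F))" for y
  proof (induction y)
    case 0
    show ?case
    proof (intro allI impI)
      fix rest :: "nat list" and T tp F :: nat assume "length rest = n"
      then have R0: "reach (pr (ncons (ev cg (nlist rest)) T) (ncons tp F)) (pr T (ncons (ncons (g rest) tp) F))"
        using computesD[OF cg] by blast
      show "reach (pr (ncons (ev (cR cg ch) (nlist (0 # rest))) T) (ncons tp F))
           (pr T (ncons (ncons (primrec_fn g h 0 rest) tp) F))"
        by (rule reach_step) (simp add: st_R0 R0)
    qed
  next
    case (Suc y)
    show ?case
    proof (intro allI impI)
      fix rest :: "nat list" and T tp F :: nat assume rest: "length rest = n"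
      have 1: "reach (pr (ncons (ev (cR cg ch) (nlist (y#rest))) (ncons (apr ch y (nlist rest)) T)) (ncons tp F))
           (pr (ncons (apr ch y (nlist rest)) T) (ncons (ncons (primrec_fn g h y rest) tp) F))"
        using Suc.IH rest by (simp del: nlist.simps)
      have 2: "reach (pr (ncons (ev ch (nlist (y # primrec_fn g h y rest # rest))) T) (ncons tp F))
          (pr T (ncons (ncons (h (y # primrec_fn g h y rest # rest)) tp) F))"
        using computesD[OF ch, of "y # primrec_fn g h y rest # rest"] rest by simp
      show "reach (pr (ncons (ev (cR cg ch) (nlist (Suc y # rest))) T) (ncons tp F))
           (pr T (ncons (ncons (primrec_fn g h (Suc y) rest) tp) F))"
        apply (rule reach_step)
        apply (simp add: st_RS)
        apply (rule reach_trans[OF 1[simplified]])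
        apply (rule reach_step)
        apply (simp add: st_apr)
        using 2 by simp
    qed
  qed
  have "computes (Suc n) (cR cg ch) (\<lambda>xs. primrec_fn g h (hd xs) (tl xs))"
    unfolding computes_def
  proof (intro allI impI)
    fix xs :: "nat list" and T tp F :: nat assume "length xs = Suc n"
    then obtain y rest where "xs = y # rest" "length rest = n" by (cases xs) auto
    then show "reach (pr (ncons (ev (cR cg ch) (nlist xs)) T) (ncons tp F))
           (pr T (ncons (ncons (primrec_fn g h (hd xs) (tl xs)) tp) F))"
      using main by simp
  qed
  then show ?case ..
next
  case (rf_mu n g)
  from rf_mu.IH obtain cg where cg: "computes (Suc n) cg g" by blast
  have "computes n (cM cg) (\<lambda>xs. LEAST y. g (y # xs) = 0)"
    unfolding computes_def
  proof (intro allI impI)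
    fix xs :: "nat list" and T tp F :: nat assume xs: "length xs = n"
    define y0 where "y0 = (LEAST y. g (y # xs) = 0)"
    have ex: "\<exists>y. g (y # xs) = 0" using rf_mu.hyps(2) xs by blast
    have y0: "g (y0 # xs) = 0" unfolding y0_def using ex by (rule LeastI_ex)
    have lt: "y < y0 \<Longrightarrow> g (y # xs) \<noteq> 0" for y unfolding y0_def using not_less_Least by blast
    have loop: "\<forall>y. y + k = y0 \<longrightarrow> reach (pr (ncons (ev cg (ncons y (nlist xs))) (ncons (mc cg y (nlist xs)) T)) (ncons tp F))
        (pr T (ncons (ncons y0 tp) F))" for k
    proof (induction k)
      case 0
      show ?case
      proof (intro allI impI)
        fix y assume "y + 0 = y0"
        then have yy: "y = y0" by simp
        have 1: "reach (pr (ncons (ev cg (nlist (y # xs))) (ncons (mc cg y (nlist xs)) T)) (ncons tp F))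
            (pr (ncons (mc cg y (nlist xs)) T) (ncons (ncons (g (y#xs)) tp) F))"
          using computesD[OF cg, of "y#xs"] xs by simp
        show "reach (pr (ncons (ev cg (ncons y (nlist xs))) (ncons (mc cg y (nlist xs)) T)) (ncons tp F))
            (pr T (ncons (ncons y0 tp) F))"
          apply (rule reach_trans[OF 1[simplified]])
          apply (rule reach_step)
          using y0 yy by (simp add: st_mc0 reach_refl)
      qed
    next
      case (Suc k)
      show ?case
      proof (intro allI impI)
        fix y assume yk: "y + Suc k = y0"
        then have gy: "g (y # xs) \<noteq> 0" using lt by simp
        have 1: "reach (pr (ncons (ev cg (nlist (y # xs))) (ncons (mc cg y (nlist xs)) T)) (ncons tp F))
            (pr (ncons (mc cg y (nlist xs)) T) (ncons (ncons (g (y#xs)) tp) F))"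
          using computesD[OF cg, of "y#xs"] xs by simp
        have 2: "reach (pr (ncons (ev cg (ncons (Suc y) (nlist xs))) (ncons (mc cg (Suc y) (nlist xs)) T)) (ncons tp F))
            (pr T (ncons (ncons y0 tp) F))"
          using Suc.IH yk by simp
        show "reach (pr (ncons (ev cg (ncons y (nlist xs))) (ncons (mc cg y (nlist xs)) T)) (ncons tp F))
            (pr T (ncons (ncons y0 tp) F))"
          apply (rule reach_trans[OF 1[simplified]])
          apply (rule reach_step)
          using gy 2 by (simp add: st_mcS)
      qed
    qed
    show "reach (pr (ncons (ev (cM cg) (nlist xs)) T) (ncons tp F))
        (pr T (ncons (ncons (LEAST y. g (y # xs) = 0) tp) F))"
      apply (rule reach_step)
      apply (simp add: st_M)
      using loop[of y0] unfolding y0_def by simp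
  qed
  then show ?case ..
next
  case (rf_ext n f f')
  then obtain c where "computes n c f" by blast
  then have "computes n c f'" using rf_ext.hyps(2) unfolding computes_def by simp
  then show ?case ..
qed

lemma tri_Suc_gt: "z < tri (Suc z)"
  using tri_ge[of "Suc z"] by simp

lemma pr_surj: "pr (p1 z) (p2 z) = z"
proof -
  define s where "s = sf z"
  have ex: "\<exists>s. z < tri (Suc s)" using tri_Suc_gt by blast
  have lt: "z < tri (Suc s)" unfolding s_def sf_def using ex by (rule LeastI_ex)
  have ge: "tri s \<le> z"
  proof (cases s)
    case 0 then show ?thesis by simp
  next
    case (Suc s')
    have "s' < s" using Suc by simp
    then have "\<not> z < tri (Suc s')" unfolding s_def sf_def using not_less_Least by blast
    then show ?thesis using Suc by simp
  qed
  have p1: "p1 z = z - tri s" unfolding p1_def s_def ..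
  have p1le: "p1 z \<le> s" using lt ge p1 by simp
  have "p1 z + p2 z = s" unfolding p2_def s_def[symmetric] using p1le by simp
  then show ?thesis unfolding pr_def using p1 ge by simp
qed

definition init :: "nat \<Rightarrow> nat \<Rightarrow> nat" where
  "init c x = pr (ncons (ev c (nlist [x])) 0) (ncons 0 0)"

lemma halt_stay: "(step ^^ k) (pr 0 Fr) = pr 0 Fr"
  by (induction k) (auto simp: st_halt)

lemma halts: "computes 1 c f \<Longrightarrow> \<exists>t. (step ^^ t) (init c x) = pr 0 (ncons (ncons (f [x]) 0) 0)"
  using computesD[of 1 c f "[x]" 0 0 0] unfolding init_def reach_def by simp

lemma halt_det:
  assumes t: "(step ^^ t) z = pr 0 Fr" and k: "p1 ((step ^^ k) z) = 0"
  shows "(step ^^ k) z = pr 0 Fr"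
proof (cases "k \<le> t")
  case True
  define w where "w = (step ^^ k) z"
  have w: "w = pr 0 (p2 w)" using pr_surj[of w] k unfolding w_def by simp
  have "(step ^^ t) z = (step ^^ (t - k)) w"
    unfolding w_def using True by (metis funpow_add le_add_diff_inverse2 o_apply)
  also have "\<dots> = pr 0 (p2 w)" by (subst w) (rule halt_stay)
  finally show ?thesis using t w unfolding w_def by simp
next
  case False
  have "(step ^^ k) z = (step ^^ (k - t)) ((step ^^ t) z)"
    using False by (metis funpow_add le_add_diff_inverse2 nat_le_linear o_apply)
  then show ?thesis using t halt_stay by simp
qed

definition Hv :: "nat \<Rightarrow> nat \<Rightarrow> nat \<Rightarrow> nat" where
  "Hv v n k = (if p1 ((step ^^ k) (init n n)) = 0 then
     (if nhd (nhd (p2 ((step ^^ k) (init n n)))) = v then 1 else 0) else 0)"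

lemma Hv_le: "Hv v n k \<le> 1" unfolding Hv_def by auto

lemma Hv_halt: assumes c: "computes 1 c f" shows "(\<exists>k. Hv v c k = 1) \<longleftrightarrow> f [c] = v"
proof -
  obtain t where t: "(step ^^ t) (init c c) = pr 0 (ncons (ncons (f [c]) 0) 0)"
    using halts[OF c] by blast
  show ?thesis
  proof
    assume "\<exists>k. Hv v c k = 1"
    then obtain k where k: "Hv v c k = 1" by blast
    then have h: "p1 ((step ^^ k) (init c c)) = 0" unfolding Hv_def by (auto split: if_splits)
    have "(step ^^ k) (init c c) = pr 0 (ncons (ncons (f [c]) 0) 0)" by (rule halt_det[OF t h])
    then show "f [c] = v" using k unfolding Hv_def by (auto split: if_splits)
  next
    assume "f [c] = v"
    then have "Hv v c t = 1" unfolding Hv_def using t by simp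
    then show "\<exists>k. Hv v c k = 1" by blast
  qed
qed

lemma rf_run: assumes "recfn n f" "recfn n g" shows "recfn n (\<lambda>xs. (step ^^ f xs) (g xs))"
proof -
  have I: "recfn 2 (\<lambda>ys. (step ^^ (ys!0)) (ys!1))" by (rule rf_iter[OF rf_step])
  show ?thesis by (rule rf_op2[where op="\<lambda>a b. (step ^^ a) b", OF _ assms]) (use I in simp)
qed

lemma rec_Hv: "recursive2 (Hv v)"
proof -
  have "recfn 2 (\<lambda>xs. Hv v (xs!0) (xs!1))"
    unfolding Hv_def init_def ev_def nlist.simps
    by (intro rf_intros rf_run rf_proj) simp_all
  then show ?thesis unfolding recursive2_def .
qed

lemma no_separation:
  assumes r: "recfn 1 (\<lambda>xs. \<chi> (xs!0))" and le: "\<forall>n. \<chi> n \<le> 1"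
    and h1: "\<forall>n. (\<exists>k. Hv 1 n k = 1) \<longrightarrow> \<chi> n = 0"
    and h0: "\<forall>n. (\<exists>k. Hv 0 n k = 1) \<longrightarrow> \<chi> n = 1"
  shows False
proof -
  obtain c where c: "computes 1 c (\<lambda>xs. \<chi> (xs!0))" using adequacy[OF r] by blast
  have "\<chi> c = 0 \<or> \<chi> c = 1" using le[rule_format, of c] by auto
  then show False
  proof
    assume a: "\<chi> c = 0"
    then have "\<exists>k. Hv 0 c k = 1" using Hv_halt[OF c, of 0] by simp
    then show False using h0 a by auto
  next
    assume a: "\<chi> c = 1"
    then have "\<exists>k. Hv 1 c k = 1" using Hv_halt[OF c, of 1] by simp
    then show False using h1 a by auto
  qed
qed

lemma rf_rec2: "recursive2 s \<Longrightarrow> recfn n f \<Longrightarrow> recfn n g \<Longrightarrow> recfn n (\<lambda>xs. s (f xs) (g xs))"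
  unfolding recursive2_def by (rule rf_op2)

lemma rec2_const: "recursive2 (\<lambda>_ _. c)"
  unfolding recursive2_def by (rule rf_const)

lemma funpow_double: "((\<lambda>z::nat. z + z) ^^ k) 1 = 2 ^ k"
  by (induction k) auto

lemma rec2_pow: "recursive2 (\<lambda>n k. 2 ^ k - 1)"
proof -
  have D: "recfn 1 (\<lambda>ys. ys!0 + ys!0)" by (intro rf_add rf_proj) simp_all
  have I: "recfn 2 (\<lambda>ys. ((\<lambda>z::nat. z + z) ^^ (ys!0)) (ys!1))" by (rule rf_iter[OF D])
  have "recfn 2 (\<lambda>xs. ((\<lambda>z::nat. z + z) ^^ (xs!1)) 1 - 1)"
    by (intro rf_sub rf_const rf_op2[where op="\<lambda>a b. ((\<lambda>z::nat. z + z) ^^ a) b", OF _ rf_proj rf_const])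
       (use I in simp_all)
  then show ?thesis unfolding recursive2_def funpow_double .
qed

fun Anum :: "(nat \<Rightarrow> nat \<Rightarrow> nat) \<Rightarrow> nat \<Rightarrow> nat \<Rightarrow> nat" where
  "Anum H n 0 = 0"
| "Anum H n (Suc k) = Anum H n k + Anum H n k + H n k"

lemma rec2_Anum: assumes H: "recursive2 H" shows "recursive2 (Anum H)"
proof -
  have h: "recfn (Suc (Suc 1)) (\<lambda>ys. ys!1 + ys!1 + H (ys!2) (ys!0))"
    by (rule rf_add rf_add rf_proj rf_rec2[OF H] | simp)+
  have R: "recfn (Suc 1) (\<lambda>xs. primrec_fn (\<lambda>_. 0) (\<lambda>ys. ys!1 + ys!1 + H (ys!2) (ys!0)) (hd xs) (tl xs))"
    by (rule rf_prim[OF rf_zero h])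
  have E: "primrec_fn (\<lambda>_. 0) (\<lambda>ys. ys!1 + ys!1 + H (ys!2) (ys!0)) k [n] = Anum H n k" for k n
    by (induction k) auto
  have R2: "recfn 2 (\<lambda>ys. Anum H (ys!1) (ys!0))"
  proof (rule rf_ext'[OF R])
    fix xs :: "nat list" assume "length xs = 2"
    then obtain p q where "xs = [p, q]" by (metis len2)
    then show "Anum H (xs!1) (xs!0) = primrec_fn (\<lambda>_. 0) (\<lambda>ys. ys!1 + ys!1 + H (ys!2) (ys!0)) (hd xs) (tl xs)"
      using E[of p q] by simp
  qed simp
  have "recfn 2 (\<lambda>xs. (\<lambda>a b. Anum H b a) (xs!1) (xs!0))"
    by (rule rf_op2[where op="\<lambda>a b. Anum H b a", OF _ rf_proj rf_proj]) (use R2 in simp_all)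
  then show ?thesis unfolding recursive2_def by simp
qed

lemma geo_sum: "summable (\<lambda>k. (1/2::real)^(Suc k))" "(\<Sum>k. (1/2::real)^(Suc k)) = 1"
proof -
  have g: "summable (\<lambda>k. (1/2::real)^k)" by (rule summable_geometric) simp
  show "summable (\<lambda>k. (1/2::real)^(Suc k))" using summable_mult[OF g, of "1/2"] by simp
  have "(\<Sum>k. (1/2::real) * (1/2)^k) = 1/2 * (\<Sum>k. (1/2::real)^k)" by (rule suminf_mult[OF g])
  also have "(\<Sum>k. (1/2::real)^k) = 2" using suminf_geometric[of "1/2::real"] by simp
  finally show "(\<Sum>k. (1/2::real)^(Suc k)) = 1" by simp
qed

definition sval :: "(nat \<Rightarrow> nat \<Rightarrow> nat) \<Rightarrow> nat \<Rightarrow> real" where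
  "sval H n = (\<Sum>k. (1/2)^(Suc k) * real (H n k))"

lemma sval_summable: assumes "\<forall>n k. H n k \<le> 1"
  shows "summable (\<lambda>k. (1/2::real)^(Suc k) * real (H n k))"
proof (rule summable_comparison_test[where g="\<lambda>k. (1/2::real)^(Suc k)"])
  show "\<exists>N. \<forall>k\<ge>N. norm ((1/2::real)^(Suc k) * real (H n k)) \<le> (1/2)^(Suc k)"
    using assms by (intro exI[of _ 0]) (auto intro: mult_left_le)
  show "summable (\<lambda>k. (1/2::real)^(Suc k))" by (rule geo_sum(1))
qed

lemma Anum_eq: "real (Anum H n k) / 2^k = (\<Sum>j<k. (1/2::real)^(Suc j) * real (H n j))"
proof (induction k)
  case 0 then show ?case by simp
next
  case (Suc k)
  have "real (Anum H n (Suc k)) / 2^(Suc k) = real (Anum H n k) / 2^k + (1/2)^(Suc k) * real (H n k)"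
    by (simp add: field_simps power_Suc)
  then show ?case using Suc by simp
qed

lemma sval_nonneg: "0 \<le> sval H n" if "\<forall>n k. H n k \<le> 1"
  unfolding sval_def using sval_summable[OF that] by (intro suminf_nonneg) auto

lemma sval_tail: assumes le: "\<forall>n k. H n k \<le> 1"
  shows "\<bar>sval H n - real (Anum H n k) / 2^k\<bar> \<le> (1/2)^k"
proof -
  let ?f = "\<lambda>j. (1/2::real)^(Suc j) * real (H n j)"
  have S: "summable ?f" by (rule sval_summable[OF le])
  have split: "sval H n = (\<Sum>j. ?f (j + k)) + (\<Sum>j<k. ?f j)"
    unfolding sval_def by (rule suminf_split_initial_segment[OF S])
  have S2: "summable (\<lambda>j. ?f (j + k))" using S by (rule summable_ignore_initial_segment)
  have G: "summable (\<lambda>j. (1/2::real)^k * (1/2)^(Suc j))"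
    by (rule summable_mult[OF geo_sum(1)])
  have nn: "0 \<le> (\<Sum>j. ?f (j + k))" using S2 by (intro suminf_nonneg) auto
  have "(\<Sum>j. ?f (j + k)) \<le> (\<Sum>j. (1/2::real)^k * (1/2)^(Suc j))"
  proof (rule suminf_le[OF _ S2 G])
    fix j
    have "?f (j + k) \<le> (1/2::real)^(Suc (j + k))" using le by (auto intro: mult_left_le)
    also have "\<dots> = (1/2)^k * (1/2)^(Suc j)" by (simp add: power_add)
    finally show "?f (j + k) \<le> (1/2::real)^k * (1/2)^(Suc j)" .
  qed
  also have "\<dots> = (1/2)^k * (\<Sum>j. (1/2::real)^(Suc j))"
    by (rule suminf_mult[OF geo_sum(1)])
  also have "(\<Sum>j. (1/2::real)^(Suc j)) = 1" by (rule geo_sum(2))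
  finally have "(\<Sum>j. ?f (j + k)) \<le> (1/2)^k" by simp
  then show ?thesis using split nn Anum_eq[of H n k] by simp
qed

lemma sval_computable: assumes H: "recursive2 H" and le: "\<forall>n k. H n k \<le> 1"
  shows "computable_seq (sval H)"
  unfolding computable_seq_def
proof (intro exI conjI)
  show "recursive2 (\<lambda>_ _. 0)" by (rule rec2_const)
  show "recursive2 (Anum H)" by (rule rec2_Anum[OF H])
  show "recursive2 (\<lambda>n k. 2 ^ k - 1)" by (rule rec2_pow)
  show "recursive2 (\<lambda>n N. N)" unfolding recursive2_def by (rule rf_proj) simp
  show "\<forall>n N k. N \<le> k \<longrightarrow> \<bar>sval H n - rat_code 0 (Anum H n k) (2 ^ k - 1)\<bar> \<le> 1 / 2 ^ N"
  proof (intro allI impI)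
    fix n N k :: nat assume Nk: "N \<le> k"
    have rc: "rat_code 0 (Anum H n k) (2 ^ k - 1) = real (Anum H n k) / 2^k"
      unfolding rat_code_def by simp
    have "\<bar>sval H n - rat_code 0 (Anum H n k) (2 ^ k - 1)\<bar> \<le> (1/2)^k"
      using sval_tail[OF le] rc by simp
    also have "(1/2::real)^k \<le> (1/2)^N" using Nk by (rule power_decreasing) auto
    finally show "\<bar>sval H n - rat_code 0 (Anum H n k) (2 ^ k - 1)\<bar> \<le> 1 / 2 ^ N"
      by (simp add: power_one_over)
  qed
qed

lemma sval_pos: assumes le: "\<forall>n k. H n k \<le> 1" and k: "H n k = 1" shows "0 < sval H n"
proof -
  let ?f = "\<lambda>j. (1/2::real)^(Suc j) * real (H n j)"
  have "0 < sval H n \<longleftrightarrow> (\<exists>i. 0 < ?f i)" unfolding sval_def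
    by (rule suminf_pos_iff[OF sval_summable[OF le]]) simp
  moreover have "0 < ?f k" using k by simp
  ultimately show ?thesis by blast
qed

lemma sval_zero: assumes "\<forall>k. H n k = 0" shows "sval H n = 0"
  unfolding sval_def using assms by simp

lemma computable_const: "computable_seq (\<lambda>_. rat_code s a b)"
  unfolding computable_seq_def
  by (intro exI[of _ "\<lambda>_ _. s"] exI[of _ "\<lambda>_ _. a"] exI[of _ "\<lambda>_ _. b"] exI[of _ "\<lambda>_ _. 0"])
     (simp add: rec2_const)

lemma computable_real_of_seq: assumes "computable_seq x" shows "computable_real (x n)"
proof -
  obtain s a b e where r: "recursive2 s" "recursive2 a" "recursive2 b" "recursive2 e"
    and approx: "\<forall>m N k. e m N \<le> k \<longrightarrow> \<bar>x m - rat_code (s m k) (a m k) (b m k)\<bar> \<le> 1 / 2 ^ N"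
    using assms unfolding computable_seq_def by blast
  have fix2: "recursive2 (\<lambda>m k. f n k)" if "recursive2 f" for f
  proof -
    have "recfn 2 (\<lambda>xs. f n (xs!1))" by (rule rf_rec2[OF that rf_const rf_proj]) simp
    then show ?thesis unfolding recursive2_def .
  qed
  show ?thesis unfolding computable_real_def computable_seq_def
    by (rule exI[of _ "\<lambda>m k. s n k"], rule exI[of _ "\<lambda>m k. a n k"], rule exI[of _ "\<lambda>m k. b n k"],
        rule exI[of _ "\<lambda>m k. e n k"]) (use r approx fix2 in auto)
qed

lemma funpow_flip: "((\<lambda>z::nat. 1 - z) ^^ k) 0 = k mod 2" "((\<lambda>z::nat. Suc 0 - z) ^^ k) 0 = k mod 2"
  by (induction k) (auto simp: mod_Suc)

lemma aux34: "3 * Suc b \<le> 4 * (a::nat) \<Longrightarrow> Suc b \<le> a + a" by presburger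
lemma aux14: "4 * (a::nat) \<le> Suc b \<Longrightarrow> Suc b - (a + a) \<noteq> 0" by presburger

lemma decide:
  assumes "computable_seq w"
  shows "\<exists>\<chi>. recfn 1 (\<lambda>xs. \<chi> (xs!0)) \<and> (\<forall>n. \<chi> n \<le> 1) \<and>
     (\<forall>n. w n = 0 \<longrightarrow> \<chi> n = 0) \<and> (\<forall>n. w n = 1 \<longrightarrow> \<chi> n = 1)"
proof -
  obtain s a b e where r: "recursive2 s" "recursive2 a" "recursive2 b" "recursive2 e"
    and approx: "\<forall>m N k. e m N \<le> k \<longrightarrow> \<bar>w m - rat_code (s m k) (a m k) (b m k)\<bar> \<le> 1 / 2 ^ N"
    using assms unfolding computable_seq_def by blast
  define \<chi> :: "nat \<Rightarrow> nat" where "\<chi> n = (if ((\<lambda>z::nat. 1 - z) ^^ (s n (e n 2))) 0 = 0 then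
       (if Suc (b n (e n 2)) - (a n (e n 2) + a n (e n 2)) = 0 then 1 else 0) else 0)" for n
  have F: "recfn 1 (\<lambda>ys. ((\<lambda>z::nat. 1 - z) ^^ (ys!0)) 0)"
  proof -
    have D: "recfn 1 (\<lambda>ys. 1 - ys!0)" by (intro rf_sub rf_const rf_proj) simp
    have I: "recfn 2 (\<lambda>ys. ((\<lambda>z::nat. 1 - z) ^^ (ys!0)) (ys!1))" by (rule rf_iter[OF D])
    show ?thesis
      by (rule rf_op2[where op="\<lambda>a b. ((\<lambda>z::nat. 1 - z) ^^ a) b", OF _ rf_proj rf_const]) (use I in simp_all)
  qed
  have Fn: "recfn 1 f \<Longrightarrow> recfn 1 (\<lambda>xs. ((\<lambda>z::nat. 1 - z) ^^ (f xs)) 0)" for f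
    by (rule rf_op1[OF F])
  have rec: "recfn 1 (\<lambda>xs. \<chi> (xs!0))"
    unfolding \<chi>_def
    by (intro rf_if rf_const rf_sub rf_Suc rf_add Fn rf_rec2[OF r(1)] rf_rec2[OF r(2)]
          rf_rec2[OF r(3)] rf_rec2[OF r(4)] rf_proj) simp_all
  have le: "\<chi> n \<le> 1" for n unfolding \<chi>_def by auto
  have close: "\<bar>w n - rat_code (s n (e n 2)) (a n (e n 2)) (b n (e n 2))\<bar> \<le> 1/4" for n
    using approx[rule_format, of n 2 "e n 2"] by simp
  have z: "\<chi> n = 0" if "w n = 0" for n
  proof -
    let ?s = "s n (e n 2)" and ?a = "a n (e n 2)" and ?b = "b n (e n 2)"
    have c: "\<bar>rat_code ?s ?a ?b\<bar> \<le> 1/4" using close[of n] that by simp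
    show ?thesis
    proof (cases "even ?s")
      case True
      then have "rat_code ?s ?a ?b = real ?a / real (Suc ?b)" unfolding rat_code_def by simp
      then have "real ?a / real (Suc ?b) \<le> 1/4" using c by simp
      then have "4 * real ?a \<le> real (Suc ?b)" by (simp add: field_simps)
      then have "real (4 * ?a) \<le> real (Suc ?b)" by simp
      then have "4 * ?a \<le> Suc ?b" by (simp only: of_nat_le_iff)
      then have "Suc ?b - (?a + ?a) \<noteq> 0" by (rule aux14)
      then show ?thesis unfolding \<chi>_def by (simp add: funpow_flip)
    next
      case False
      then have "s n (e n 2) mod 2 = 1" by presburger
      then show ?thesis unfolding \<chi>_def by (simp add: funpow_flip)
    qed
  qed
  have o: "\<chi> n = 1" if "w n = 1" for n
  proof -
    let ?s = "s n (e n 2)" and ?a = "a n (e n 2)" and ?b = "b n (e n 2)"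
    have c0: "\<bar>1 - rat_code ?s ?a ?b\<bar> \<le> 1/4" using close[of n] that by simp
    have c: "3/4 \<le> rat_code ?s ?a ?b" using c0 by linarith
    have ev: "even ?s"
    proof (rule ccontr)
      assume "odd ?s"
      then have "rat_code ?s ?a ?b = - (real ?a / real (Suc ?b))" unfolding rat_code_def by simp
      moreover have "0 \<le> real ?a / real (Suc ?b)" by simp
      ultimately show False using c by linarith
    qed
    then have "rat_code ?s ?a ?b = real ?a / real (Suc ?b)" unfolding rat_code_def by simp
    then have "3/4 \<le> real ?a / real (Suc ?b)" using c by simp
    then have "3 * real (Suc ?b) \<le> 4 * real ?a" by (simp add: field_simps)
    then have "real (3 * Suc ?b) \<le> real (4 * ?a)" by simp
    then have "3 * Suc ?b \<le> 4 * ?a" by (simp only: of_nat_le_iff)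
    then have "Suc ?b \<le> ?a + ?a" by (rule aux34)
    moreover have "s n (e n 2) mod 2 = 0" using ev by presburger
    ultimately show ?thesis unfolding \<chi>_def by (simp add: funpow_flip)
  qed
  show ?thesis using rec le z o by blast
qed

lemma mi_nonneg:
  assumes P: "is_pmf P" and W: "test_channel W"
  shows "0 \<le> mutual_info P W"
proof -
  have Pn: "\<And>x. 0 \<le> P x" and Ps: "(\<Sum>x\<in>UNIV. P x) = 1" using P unfolding is_pmf_def by auto
  have Wn: "\<And>x y. 0 \<le> W x y" and Ws: "\<And>x. (\<Sum>y\<in>UNIV. W x y) = 1" using W unfolding test_channel_def by auto
  define q where "q = out_dist P W"
  have qn: "0 \<le> q y" for y unfolding q_def out_dist_def using Pn Wn by (intro sum_nonneg) simp
  have qs: "(\<Sum>y\<in>UNIV. q y) = 1"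
  proof -
    have "(\<Sum>y\<in>UNIV. q y) = (\<Sum>x\<in>UNIV. \<Sum>y\<in>UNIV. P x * W x y)"
      unfolding q_def out_dist_def by (rule sum.swap)
    also have "\<dots> = (\<Sum>x\<in>UNIV. P x * (\<Sum>y\<in>UNIV. W x y))" by (simp add: sum_distrib_left)
    also have "\<dots> = 1" using Ws Ps by simp
    finally show ?thesis .
  qed
  define tm where "tm x y = (if P x * W x y = 0 then 0 else P x * W x y * log 2 (W x y / q y))" for x y
  have mi: "mutual_info P W = (\<Sum>x\<in>UNIV. \<Sum>y\<in>UNIV. tm x y)"
    unfolding mutual_info_def tm_def q_def ..
  have bound: "(P x * W x y - P x * q y) / ln 2 \<le> tm x y" for x y
  proof (cases "P x * W x y = 0")
    case True
    have "0 \<le> P x * q y" using Pn qn by simp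
    then have a: "0 \<le> P x * q y / ln 2" by simp
    have "(P x * W x y - P x * q y) / ln 2 = - (P x * q y / ln 2)"
      by (simp only: True diff_divide_distrib)
    then have b: "(P x * W x y - P x * q y) / ln 2 \<le> 0" using a by linarith
    have "tm x y = 0" using True unfolding tm_def by simp
    then show ?thesis using b by simp
  next
    case False
    have px: "0 < P x" using False Pn[of x] by (cases "P x = 0") auto
    have wx: "0 < W x y" using False Wn[of x y] by (cases "W x y = 0") auto
    have "P x * W x y \<le> q y"
      unfolding q_def out_dist_def using Pn Wn
      by (intro member_le_sum[where f="\<lambda>x. P x * W x y"]) auto
    then have qp: "0 < q y" using px wx by (smt (verit) mult_pos_pos)
    have l1: "ln (q y / W x y) \<le> q y / W x y - 1" using qp wx by (intro ln_le_minus_one) simp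
    have l2: "ln (W x y / q y) = - ln (q y / W x y)" using qp wx by (simp add: ln_div)
    have l: "1 - q y / W x y \<le> ln (W x y / q y)" using l1 l2 by simp
    have pw: "0 < P x * W x y" using px wx by simp
    have "P x * W x y * (1 - q y / W x y) \<le> P x * W x y * ln (W x y / q y)"
      using l pw by (intro mult_left_mono) auto
    moreover have "P x * W x y * (1 - q y / W x y) = P x * W x y - P x * q y"
      using wx by (simp add: field_simps)
    ultimately have "P x * W x y - P x * q y \<le> P x * W x y * ln (W x y / q y)" by simp
    then have "(P x * W x y - P x * q y) / ln 2 \<le> P x * W x y * ln (W x y / q y) / ln 2"
      by (intro divide_right_mono) auto
    also have "\<dots> = P x * W x y * log 2 (W x y / q y)" by (simp add: log_def)
    finally show ?thesis using False unfolding tm_def by simp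
  qed
  have "(\<Sum>x\<in>UNIV. \<Sum>y\<in>UNIV. (P x * W x y - P x * q y) / ln 2) \<le> (\<Sum>x\<in>UNIV. \<Sum>y\<in>UNIV. tm x y)"
    using bound by (intro sum_mono) auto
  moreover have "(\<Sum>x\<in>UNIV. \<Sum>y\<in>UNIV. (P x * W x y - P x * q y) / ln 2) = 0"
  proof -
    have "(\<Sum>x\<in>UNIV. \<Sum>y\<in>UNIV. (P x * W x y - P x * q y) / ln 2)
        = (\<Sum>x\<in>UNIV. (P x * (\<Sum>y\<in>UNIV. W x y) - P x * (\<Sum>y\<in>UNIV. q y)) / ln 2)"
      by (simp add: sum_divide_distrib[symmetric] sum_subtractf sum_distrib_left)
    also have "\<dots> = 0" using Ws qs by simp
    finally show ?thesis .
  qed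
  ultimately show ?thesis using mi by simp
qed

definition cchan :: "'y \<Rightarrow> 'x \<Rightarrow> 'y \<Rightarrow> real" where
  "cchan ys x y = (if y = ys then 1 else 0)"

lemma cchan_test: "test_channel (cchan ys :: 'x::finite \<Rightarrow> 'y::finite \<Rightarrow> real)"
  unfolding test_channel_def cchan_def by simp

lemma cchan_mi: assumes "is_pmf P" shows "mutual_info P (cchan ys :: 'x::finite \<Rightarrow> 'y::finite \<Rightarrow> real) = 0"
proof -
  have Ps: "(\<Sum>x\<in>UNIV. P x) = 1" using assms unfolding is_pmf_def by auto
  have q: "out_dist P (cchan ys) y = (if y = ys then 1 else 0)" for y
    unfolding out_dist_def cchan_def using Ps by auto
  show ?thesis unfolding mutual_info_def
    by (intro sum.neutral ballI) (auto simp: q cchan_def)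
qed

lemma cchan_dist: "avg_distortion P (cchan ys :: 'x::finite \<Rightarrow> 'y::finite \<Rightarrow> real) d = (\<Sum>x\<in>UNIV. P x * d x ys)"
proof -
  have "(\<Sum>y\<in>UNIV. P x * cchan ys x y * d x y) = P x * d x ys" for x
  proof -
    have "(\<Sum>y\<in>UNIV. P x * cchan ys x y * d x y) = (\<Sum>y\<in>UNIV. if y = ys then P x * d x y else 0)"
      by (rule sum.cong) (auto simp: cchan_def)
    also have "\<dots> = P x * d x ys" by simp
    finally show ?thesis .
  qed
  then show ?thesis unfolding avg_distortion_def by simp
qed

lemma admissible_lemma:
  fixes P :: "'x::finite \<Rightarrow> real" and d :: "'x \<Rightarrow> 'y::finite \<Rightarrow> real"
  assumes "is_pmf P" "nontrivial_pmf P" "\<forall>x. computable_real (P x)"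
    "\<forall>x y. 0 \<le> d x y \<and> computable_real (d x y)" and z: "\<forall>x. d x ys = 0"
    and c0: "computable_real 0"
  shows "admissible_input P d 0"
proof -
  have "cchan ys \<in> P_opt d 0 P"
    unfolding P_opt_def
  proof (intro CollectI conjI allI impI)
    show "test_channel (cchan ys)" by (rule cchan_test)
    show "avg_distortion P (cchan ys) d \<le> 0" using cchan_dist[of P ys d] z by simp
    fix W' assume "test_channel W' \<and> avg_distortion P W' d \<le> 0"
    then have "test_channel W'" by simp
    then have a: "0 \<le> mutual_info P W'" by (rule mi_nonneg[OF assms(1)])
    have b: "mutual_info P (cchan ys) = 0" by (rule cchan_mi[OF assms(1)])
    show "mutual_info P (cchan ys) \<le> mutual_info P W'" using a b by linarith
  qed
  then show ?thesis unfolding admissible_input_def using assms by blast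
qed

lemma avg_zero_term:
  assumes W: "test_channel W" and P: "\<forall>x. 0 \<le> P x" and d: "\<forall>x y. 0 \<le> d x y"
    and a: "avg_distortion P W d \<le> 0"
  shows "P x * W x y * d x y = 0"
proof -
  have Wn: "\<And>x y. 0 \<le> W x y" using W unfolding test_channel_def by auto
  have nn: "\<And>x y. 0 \<le> P x * W x y * d x y" using Wn P d by simp
  define I where "I x = (\<Sum>y\<in>UNIV. P x * W x y * d x y)" for x
  have inner: "\<And>x. 0 \<le> I x" unfolding I_def using nn by (intro sum_nonneg) auto
  have av: "avg_distortion P W d = (\<Sum>x\<in>UNIV. I x)" unfolding avg_distortion_def I_def ..
  have "0 \<le> (\<Sum>x\<in>UNIV. I x)" using inner by (intro sum_nonneg) auto
  then have "(\<Sum>x\<in>UNIV. I x) = 0" using a av by linarith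
  then have "\<forall>x\<in>UNIV. I x = 0" using inner by (subst (asm) sum_nonneg_eq_0_iff) auto
  then have "I x = 0" by blast
  then have "\<forall>y\<in>UNIV. P x * W x y * d x y = 0" unfolding I_def using nn by (subst (asm) sum_nonneg_eq_0_iff) auto
  then show ?thesis by blast
qed

lemma Hv_1: "Hv v n k = 1 \<longleftrightarrow> p1 ((step ^^ k) (init n n)) = 0 \<and> nhd (nhd (p2 ((step ^^ k) (init n n)))) = v"
  unfolding Hv_def by simp

lemma Hv_unique: assumes "Hv v n k = 1" "Hv v' n k' = 1" shows "v = v'"
proof -
  obtain w where wd: "(step ^^ k) (init n n) = w" by blast
  have h: "p1 w = 0" and hv: "nhd (nhd (p2 w)) = v" using assms(1) wd unfolding Hv_1 by auto
  have w: "(step ^^ k) (init n n) = pr 0 (p2 w)" using pr_surj[of w] h wd by simp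
  have h': "p1 ((step ^^ k') (init n n)) = 0" and hv': "nhd (nhd (p2 ((step ^^ k') (init n n)))) = v'"
    using assms(2) unfolding Hv_1 by auto
  have w': "(step ^^ k') (init n n) = pr 0 (p2 w)" by (rule halt_det[OF w h'])
  show ?thesis using hv hv' w' by simp
qed

lemma Hv01: "Hv v n k \<noteq> 1 \<Longrightarrow> Hv v n k = 0" unfolding Hv_def by (simp split: if_split_asm)

theorem mainTheorem1:
  fixes F :: "('x::finite \<Rightarrow> real) \<Rightarrow> ('x \<Rightarrow> 'y::finite \<Rightarrow> real) \<Rightarrow> real \<Rightarrow> ('x \<Rightarrow> 'y \<Rightarrow> real)"
  assumes "card (UNIV :: 'x set) \<ge> 2" and "card (UNIV :: 'y set) \<ge> 2"
    and "F \<in> M_opt"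
  shows "\<not> BM_computable F"
proof
  assume BM: "BM_computable F"
  obtain x0 :: 'x where True by blast
  have "UNIV \<noteq> {x0}"
  proof
    assume h: "UNIV = {x0}"
    have "card (UNIV :: 'x set) = 1" unfolding h by simp
    then show False using assms(1) by simp
  qed
  then have "\<exists>x1. x0 \<noteq> x1" by auto
  then obtain x1 :: 'x where x01: "x0 \<noteq> x1" by blast
  obtain y0 :: 'y where True by blast
  have "UNIV \<noteq> {y0}"
  proof
    assume h: "UNIV = {y0}"
    have "card (UNIV :: 'y set) = 1" unfolding h by simp
    then show False using assms(2) by simp
  qed
  then have "\<exists>y1. y0 \<noteq> y1" by auto
  then obtain y1 :: 'y where y01: "y0 \<noteq> y1" by blast
  define PX :: "'x \<Rightarrow> real" where "PX x = (if x = x0 \<or> x = x1 then 1/2 else 0)" for x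
  define al where "al = sval (Hv 1)"
  define be where "be = sval (Hv 0)"
  define dd :: "nat \<Rightarrow> 'x \<Rightarrow> 'y \<Rightarrow> real" where
    "dd n x y = (if y = y0 then al n else if y = y1 then be n else 1)" for n x y
  have Hle: "\<forall>n k. Hv v n k \<le> 1" for v using Hv_le by blast
  have al_nn: "0 \<le> al n" for n unfolding al_def by (rule sval_nonneg[OF Hle])
  have be_nn: "0 \<le> be n" for n unfolding be_def by (rule sval_nonneg[OF Hle])
  have al_c: "computable_seq al" unfolding al_def by (rule sval_computable[OF rec_Hv Hle])
  have be_c: "computable_seq be" unfolding be_def by (rule sval_computable[OF rec_Hv Hle])
  have one_c: "computable_seq (\<lambda>_. 1::real)" using computable_const[of 0 1 0] by (simp add: rat_code_def)
  have half_c: "computable_seq (\<lambda>_. 1/2::real)" using computable_const[of 0 1 1] by (simp add: rat_code_def)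
  have zero_c: "computable_seq (\<lambda>_. 0::real)" using computable_const[of 0 0 0] by (simp add: rat_code_def)
  have PX_c: "computable_seq (\<lambda>n. PX x)" for x unfolding PX_def using half_c zero_c by auto
  have dd_c: "computable_seq (\<lambda>n. dd n x y)" for x y
    unfolding dd_def using al_c be_c one_c by (cases "y = y0"; cases "y = y1") auto
  have PX_pmf: "is_pmf PX"
  proof -
    have "(\<Sum>x\<in>UNIV. PX x) = (\<Sum>x\<in>{x0, x1}. 1/2)"
      unfolding PX_def by (rule sum.mono_neutral_cong_right) auto
    also have "\<dots> = 1" using x01 by simp
    finally show ?thesis unfolding is_pmf_def PX_def by simp
  qed
  have PX_nt: "nontrivial_pmf PX" unfolding nontrivial_pmf_def PX_def by simp
  have PX_cr: "\<forall>x. computable_real (PX x)"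
    using PX_c computable_real_of_seq by blast
  have zero_cr: "computable_real 0" unfolding computable_real_def by (rule zero_c)
  have excl: "al n = 0 \<or> be n = 0" for n
  proof (rule ccontr)
    assume "\<not> (al n = 0 \<or> be n = 0)"
    then have "\<exists>k. Hv 1 n k = 1" "\<exists>k. Hv 0 n k = 1"
      unfolding al_def be_def using sval_zero Hv01 by metis+
    then show False using Hv_unique by (metis zero_neq_one)
  qed
  have ddn: "\<forall>x y. 0 \<le> dd n x y" for n unfolding dd_def using al_nn be_nn by simp
  have dd_cr: "computable_real (dd n x y)" for n x y by (rule computable_real_of_seq[OF dd_c])
  have ddall: "\<forall>x y. 0 \<le> dd n x y \<and> computable_real (dd n x y)" for n using ddn dd_cr by blast
  have adm: "admissible_input PX (dd n) 0" for n
  proof (cases "al n = 0")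
    case True
    then have z: "\<forall>x. dd n x y0 = 0" unfolding dd_def by simp
    show ?thesis by (rule admissible_lemma[OF PX_pmf PX_nt PX_cr ddall z zero_cr])
  next
    case False
    then have "be n = 0" using excl by blast
    then have z: "\<forall>x. dd n x y1 = 0" unfolding dd_def using y01 by simp
    show ?thesis by (rule admissible_lemma[OF PX_pmf PX_nt PX_cr ddall z zero_cr])
  qed
  have "computable_seq (\<lambda>n. F (\<lambda>x. PX x) (dd n) 0 x0 y0)"
    using BM unfolding BM_computable_def
    using adm PX_c dd_c zero_c
    by (auto dest!: spec[of _ "\<lambda>n. PX"] spec[of _ dd] spec[of _ "\<lambda>n. 0"])
  then obtain \<chi> where rec: "recfn 1 (\<lambda>xs. \<chi> (xs!0))" and le: "\<forall>n. \<chi> n \<le> 1"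
    and c0: "\<forall>n. F PX (dd n) 0 x0 y0 = 0 \<longrightarrow> \<chi> n = 0" and c1: "\<forall>n. F PX (dd n) 0 x0 y0 = 1 \<longrightarrow> \<chi> n = 1"
    using decide by force
  have opt: "F PX (dd n) 0 \<in> P_opt (dd n) 0 PX" for n
    using assms(3) adm unfolding M_opt_def by blast
  have PXn: "\<forall>x. 0 \<le> PX x" unfolding PX_def by simp
  have h1: "\<forall>n. (\<exists>k. Hv 1 n k = 1) \<longrightarrow> \<chi> n = 0"
  proof (intro allI impI)
    fix n assume "\<exists>k. Hv 1 n k = 1"
    then have pos: "0 < al n" unfolding al_def using sval_pos[OF Hle] by blast
    let ?W = "F PX (dd n) 0"
    have W: "test_channel ?W" "avg_distortion PX ?W (dd n) \<le> 0" using opt[of n] unfolding P_opt_def by auto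
    have "PX x0 * ?W x0 y0 * dd n x0 y0 = 0" by (rule avg_zero_term[OF W(1) PXn ddn W(2)])
    then have "?W x0 y0 = 0" using pos unfolding PX_def dd_def by simp
    then show "\<chi> n = 0" using c0 by blast
  qed
  have h0: "\<forall>n. (\<exists>k. Hv 0 n k = 1) \<longrightarrow> \<chi> n = 1"
  proof (intro allI impI)
    fix n assume "\<exists>k. Hv 0 n k = 1"
    then have pos: "0 < be n" unfolding be_def using sval_pos[OF Hle] by blast
    let ?W = "F PX (dd n) 0"
    have W: "test_channel ?W" "avg_distortion PX ?W (dd n) \<le> 0" using opt[of n] unfolding P_opt_def by auto
    have z: "?W x0 y = 0" if "y \<noteq> y0" for y
    proof -
      have "PX x0 * ?W x0 y * dd n x0 y = 0" by (rule avg_zero_term[OF W(1) PXn ddn W(2)])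
      moreover have "0 < dd n x0 y" unfolding dd_def using that pos by auto
      ultimately show ?thesis unfolding PX_def by simp
    qed
    have s: "(\<Sum>y\<in>UNIV. ?W x0 y) = 1" using W(1) unfolding test_channel_def by blast
    have "(\<Sum>y\<in>UNIV. ?W x0 y) = ?W x0 y0 + (\<Sum>y\<in>UNIV - {y0}. ?W x0 y)"
      by (rule sum.remove) auto
    also have "(\<Sum>y\<in>UNIV - {y0}. ?W x0 y) = 0" using z by (intro sum.neutral) auto
    finally have "?W x0 y0 = 1" using s by simp
    then show "\<chi> n = 1" using c1 by blast
  qed
  show False by (rule no_separation[OF rec le h1 h0])
qed

end
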